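(* There exist fair division instances with divisible goods, additive valuations and generalized assignment constraints in which the set of FEF allocations is not convex.
   Context: There are $n$ agents and $m$ divisible goods. An allocation is $x=(x_1,\dots,x_n)$ with $x_i\in[0,1]^m$ and $\sum_i x_{i,g}\le 1$ for each good $g$; the charity receives $x_{\mathrm{charity},g}=1-\sum_i x_{i,g}$. Valuations are additive: $v_i(y)=\sum_g y_g v_{i,g}$ with $v_{i,g}\ge0$. Generalized assignment constraints: each agent $i$ has sizes $s_i(g)\ge 0$ and a budget $B_i\ge0$, and a bundle $y\in[0,1]^m$ is feasible for $i$ iff $\sum_g s_i(g)y_g\le B_i$; an allocation is feasible if each $x_i$ is feasible for $i$. A feasible allocation is FEF if for all agents $i,j$, every $y\le x_j$ (componentwise) feasible for $i$ satisfies $v_i(x_i)\ge v_i(y)$, and likewise every $y\le x_{\mathrm{charity}}$ feasible for $i$ satisfies $v_i(x_i)\ge v_i(y)$. *)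

theory Defs
  imports "HOL-Analysis.Analysis"
begin

(* Agents 0..<n, goods 0..<m; x i g = fraction of good g to agent i;
   valuations v i g, sizes s i g, budgets B i. *)

definition unitbox :: "nat \<Rightarrow> (nat \<Rightarrow> real) \<Rightarrow> bool" where
  "unitbox m y \<longleftrightarrow> (\<forall>g<m. 0 \<le> y g \<and> y g \<le> 1)"

definition val :: "nat \<Rightarrow> (nat \<Rightarrow> real) \<Rightarrow> (nat \<Rightarrow> real) \<Rightarrow> real" where
  "val m vi y = (\<Sum>g<m. y g * vi g)"

definition feasible_bundle ::
  "nat \<Rightarrow> (nat \<Rightarrow> real) \<Rightarrow> real \<Rightarrow> (nat \<Rightarrow> real) \<Rightarrow> bool" where
  "feasible_bundle m si Bi y \<longleftrightarrow> unitbox m y \<and> (\<Sum>g<m. si g * y g) \<le> Bi"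

definition allocation :: "nat \<Rightarrow> nat \<Rightarrow> (nat \<Rightarrow> nat \<Rightarrow> real) \<Rightarrow> bool" where
  "allocation n m x \<longleftrightarrow> (\<forall>i<n. unitbox m (x i)) \<and> (\<forall>g<m. (\<Sum>i<n. x i g) \<le> 1)"

definition charity :: "nat \<Rightarrow> (nat \<Rightarrow> nat \<Rightarrow> real) \<Rightarrow> nat \<Rightarrow> real" where
  "charity n x g = 1 - (\<Sum>i<n. x i g)"

definition feasible_alloc ::
  "nat \<Rightarrow> nat \<Rightarrow> (nat \<Rightarrow> nat \<Rightarrow> real) \<Rightarrow> (nat \<Rightarrow> real) \<Rightarrow> (nat \<Rightarrow> nat \<Rightarrow> real) \<Rightarrow> bool" where
  "feasible_alloc n m s B x \<longleftrightarrow> allocation n m x \<and> (\<forall>i<n. feasible_bundle m (s i) (B i) (x i))"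

definition below :: "nat \<Rightarrow> (nat \<Rightarrow> real) \<Rightarrow> (nat \<Rightarrow> real) \<Rightarrow> bool" where
  "below m y z \<longleftrightarrow> (\<forall>g<m. y g \<le> z g)"

definition FEF ::
  "nat \<Rightarrow> nat \<Rightarrow> (nat \<Rightarrow> nat \<Rightarrow> real) \<Rightarrow> (nat \<Rightarrow> nat \<Rightarrow> real) \<Rightarrow> (nat \<Rightarrow> real)
   \<Rightarrow> (nat \<Rightarrow> nat \<Rightarrow> real) \<Rightarrow> bool" where
  "FEF n m v s B x \<longleftrightarrow> feasible_alloc n m s B x \<and>
     (\<forall>i<n. (\<forall>j<n. \<forall>y. below m y (x j) \<and> feasible_bundle m (s i) (B i) y
                       \<longrightarrow> val m (v i) (x i) \<ge> val m (v i) y) \<and>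
            (\<forall>y. below m y (charity n x) \<and> feasible_bundle m (s i) (B i) y
                       \<longrightarrow> val m (v i) (x i) \<ge> val m (v i) y))"

end

theory Submission
  imports Defs
begin

lemma two_cases: "(i::nat) < 2 \<longleftrightarrow> i = 0 \<or> i = 1" by auto

lemma sum2: "(\<Sum>g<(2::nat). f g) = f 0 + (f 1 :: real)"
  by (simp add: numeral_2_eq_2)

definition "vv = (\<lambda>(i::nat) (g::nat). if i = 0 then 1 else (0::real))"
definition "ss = (\<lambda>(i::nat) (g::nat). if i = 0 \<and> g = 1 then 1 else (0::real))"
definition "BB = (\<lambda>(i::nat). if i = 0 then 1/2 else (0::real))"
definition "xa = (\<lambda>(i::nat) (g::nat). if i = 0 \<and> g = 0 then 1/2 else if i = 1 \<and> g = 1 then 1 else (0::real))"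
definition "xb = (\<lambda>(i::nat) (g::nat). if g = 0 \<and> i < 2 then 1/2 else (0::real))"

lemma key:
  assumes "feasible_bundle 2 (ss 0) (BB 0) y" "below 2 y z" "z 0 \<le> 1/2" "z 1 \<le> 0 \<or> z 0 \<le> 0"
  shows "val 2 (vv 0) y \<le> 1/2"
proof -
  have a: "y 0 \<le> z 0" "y 1 \<le> z 1" using assms(2) by (auto simp: below_def)
  have b: "0 \<le> y 0" "0 \<le> y 1" "y 1 \<le> 1/2" using assms(1)
    by (auto simp: feasible_bundle_def unitbox_def sum2 ss_def BB_def)
  have "val 2 (vv 0) y = y 0 + y 1" by (simp add: val_def sum2 vv_def)
  then show ?thesis using a b assms(3,4) by linarith
qed

lemma zero1:
  "val 2 (vv 1) y = 0"
  by (simp add: val_def vv_def)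

lemma FEF_xa: "FEF 2 2 vv ss BB xa"
proof -
  have fa: "feasible_alloc 2 2 ss BB xa"
    by (auto simp: feasible_alloc_def allocation_def unitbox_def feasible_bundle_def sum2 two_cases xa_def ss_def BB_def)
  have v0: "val 2 (vv 0) (xa 0) = 1/2" by (simp add: val_def sum2 vv_def xa_def)
  show ?thesis unfolding FEF_def
  proof (intro conjI fa allI impI)
    fix i j y assume i: "i < 2" and j: "j < 2" and h: "below 2 y (xa j) \<and> feasible_bundle 2 (ss i) (BB i) y"
    show "val 2 (vv i) y \<le> val 2 (vv i) (xa i)"
    proof (cases "i = 0")
      case True
      show ?thesis using key[of y "xa j"] h j True v0 by (auto simp: two_cases xa_def)
    next
      case False then have "i = 1" using i by auto
      then show ?thesis by (simp add: val_def vv_def)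
    qed
  next
    fix i y assume i: "i < 2" and h: "below 2 y (charity 2 xa) \<and> feasible_bundle 2 (ss i) (BB i) y"
    show "val 2 (vv i) y \<le> val 2 (vv i) (xa i)"
    proof (cases "i = 0")
      case True
      show ?thesis using key[of y "charity 2 xa"] h True v0 by (auto simp: charity_def sum2 xa_def)
    next
      case False then have "i = 1" using i by auto
      then show ?thesis by (simp add: val_def vv_def)
    qed
  qed
qed

lemma FEF_xb: "FEF 2 2 vv ss BB xb"
proof -
  have fa: "feasible_alloc 2 2 ss BB xb"
    by (auto simp: feasible_alloc_def allocation_def unitbox_def feasible_bundle_def sum2 two_cases xb_def ss_def BB_def)
  have v0: "val 2 (vv 0) (xb 0) = 1/2" by (simp add: val_def sum2 vv_def xb_def)
  show ?thesis unfolding FEF_def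
  proof (intro conjI fa allI impI)
    fix i j y assume i: "i < 2" and j: "j < 2" and h: "below 2 y (xb j) \<and> feasible_bundle 2 (ss i) (BB i) y"
    show "val 2 (vv i) y \<le> val 2 (vv i) (xb i)"
    proof (cases "i = 0")
      case True
      show ?thesis using key[of y "xb j"] h j True v0 by (auto simp: two_cases xb_def)
    next
      case False then have "i = 1" using i by auto
      then show ?thesis by (simp add: val_def vv_def)
    qed
  next
    fix i y assume i: "i < 2" and h: "below 2 y (charity 2 xb) \<and> feasible_bundle 2 (ss i) (BB i) y"
    show "val 2 (vv i) y \<le> val 2 (vv i) (xb i)"
    proof (cases "i = 0")
      case True
      show ?thesis using key[of y "charity 2 xb"] h True v0 by (auto simp: charity_def sum2 xb_def)
    next
      case False then have "i = 1" using i by auto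
      then show ?thesis by (simp add: val_def vv_def)
    qed
  qed
qed

lemma not_mid: "\<not> FEF 2 2 vv ss BB (\<lambda>i g. (1/2) * xa i g + (1 - 1/2) * xb i g)"
proof
  let ?m = "\<lambda>i g. (1/2::real) * xa i g + (1 - 1/2) * xb i g"
  let ?y = "\<lambda>g::nat. if g = 0 then 1/4 else if g = 1 then 1/2 else (0::real)"
  assume f: "FEF 2 2 vv ss BB ?m"
  have "below 2 ?y (?m 1)"
    by (auto simp: below_def two_cases xa_def xb_def)
  moreover have "feasible_bundle 2 (ss 0) (BB 0) ?y"
    by (auto simp: feasible_bundle_def unitbox_def sum2 two_cases ss_def BB_def)
  ultimately have "val 2 (vv 0) ?y \<le> val 2 (vv 0) (?m 0)"
  proof -
    have "\<forall>i<2. \<forall>j<2. \<forall>y. below 2 y (?m j) \<and> feasible_bundle 2 (ss i) (BB i) y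
                       \<longrightarrow> val 2 (vv i) (?m i) \<ge> val 2 (vv i) y"
      using f unfolding FEF_def by blast
    note g = this[rule_format, of 0 1 ?y]
    then show "below 2 ?y (?m 1) \<Longrightarrow> feasible_bundle 2 (ss 0) (BB 0) ?y \<Longrightarrow> val 2 (vv 0) ?y \<le> val 2 (vv 0) (?m 0)"
      using g by simp
  qed
  then show False by (simp add: val_def sum2 vv_def xa_def xb_def)
qed

theorem theorem2:
  shows "\<exists>(n::nat) (m::nat) (v::nat \<Rightarrow> nat \<Rightarrow> real) (s::nat \<Rightarrow> nat \<Rightarrow> real) (B::nat \<Rightarrow> real).
           (\<forall>i<n. \<forall>g<m. v i g \<ge> 0 \<and> s i g \<ge> 0) \<and> (\<forall>i<n. B i \<ge> 0) \<and>
           \<not> (\<forall>x y (t::real). FEF n m v s B x \<and> FEF n m v s B y \<and> 0 \<le> t \<and> t \<le> 1 \<longrightarrow>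
                 FEF n m v s B (\<lambda>i g. t * x i g + (1 - t) * y i g))"
proof (intro exI conjI)
  show "\<forall>i<2. \<forall>g<2. vv i g \<ge> 0 \<and> ss i g \<ge> 0" by (simp add: vv_def ss_def)
  show "\<forall>i<2. BB i \<ge> 0" by (simp add: BB_def)
  show "\<not> (\<forall>x y (t::real). FEF 2 2 vv ss BB x \<and> FEF 2 2 vv ss BB y \<and> 0 \<le> t \<and> t \<le> 1 \<longrightarrow>
                 FEF 2 2 vv ss BB (\<lambda>i g. t * x i g + (1 - t) * y i g))"
  proof
    assume a: "\<forall>x y (t::real). FEF 2 2 vv ss BB x \<and> FEF 2 2 vv ss BB y \<and> 0 \<le> t \<and> t \<le> 1 \<longrightarrow>
                 FEF 2 2 vv ss BB (\<lambda>i g. t * x i g + (1 - t) * y i g)"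
    have "FEF 2 2 vv ss BB (\<lambda>i g. (1/2) * xa i g + (1 - 1/2) * xb i g)"
      using a[rule_format, of xa xb "1/2"] FEF_xa FEF_xb by simp
    with not_mid show False by blast
  qed
qed

end
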